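(* Let $\ell\in\{\ell_{lin},\ell_{log}\}$ and suppose the matrix $[X\ Z]\in\mathbb{R}^{n\times(p_1+p_2)}$ is $s$-regular, where $s=s_1+s_2$. Then (SCL) has a global minimizer, (SCL) has only finitely many local minimizers, and each local minimizer $\beta^*$ is a strict (isolated) local minimizer: there exists $\delta>0$ such that $\beta^*$ is the unique minimizer of $f$ over $\{\beta\in\Sigma:\|\beta-\beta^*\|<\delta\}$.
   Context: Data: $X\in\mathbb{R}^{n\times p_1}$, $Z\in\mathbb{R}^{n\times p_2}$ with rows $x_i,z_i$; $y\in\mathbb{R}^n$ ($y\in\{0,1\}^n$ for $\ell_{log}$); $a,b,c>0$; integers $1\le s_j\le p_j$. Losses $\ell_{lin}(\beta;X,y)=\frac12\sum_i(y_i-\langle x_i,\beta\rangle)^2$, $\ell_{log}(\beta;X,y)=\sum_i(\log(1+\exp\langle x_i,\beta\rangle)-y_i\langle x_i,\beta\rangle)$. Objective $f(\beta)=\frac1n[a\ell(\beta_1;X,y)+b\ell(\beta_2;Z,y)+\frac c2\|X\beta_1-Z\beta_2\|^2]$, $\beta=(\beta_1;\beta_2)$. (SCL): minimize $f$ subject to $\|\beta_1\|_0\le s_1,\|\beta_2\|_0\le s_2$; feasible set $\Sigma$. A local minimizer is a feasible point minimizing $f$ over feasible points in some neighborhood. A matrix is $s$-regular if any $s$ of its columns are linearly independent. *)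

theory Defs
  imports "HOL-Analysis.Analysis"
begin

datatype loss = Lin | Log

definition loss_fun :: "loss \<Rightarrow> real^'p \<Rightarrow> real^'p^'n \<Rightarrow> real^'n \<Rightarrow> real" where
  "loss_fun l \<beta> X y = (case l of
     Lin \<Rightarrow> (1/2) * (\<Sum>i\<in>UNIV. (y$i - (X *v \<beta>)$i)^2)
   | Log \<Rightarrow> (\<Sum>i\<in>UNIV. ln (1 + exp ((X *v \<beta>)$i)) - y$i * (X *v \<beta>)$i))"

definition scl_obj :: "loss \<Rightarrow> real \<Rightarrow> real \<Rightarrow> real \<Rightarrow> real^'p1^'n \<Rightarrow> real^'p2^'n \<Rightarrow> real^'n
    \<Rightarrow> ((real^'p1) \<times> (real^'p2)) \<Rightarrow> real" where
  "scl_obj l a b c X Z y \<beta> = (1 / real CARD('n)) *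
     (a * loss_fun l (fst \<beta>) X y + b * loss_fun l (snd \<beta>) Z y
      + (c/2) * (norm (X *v fst \<beta> - Z *v snd \<beta>))^2)"

definition l0norm :: "real^'p \<Rightarrow> nat" where
  "l0norm v = card {i. v$i \<noteq> 0}"

definition scl_feasible :: "nat \<Rightarrow> nat \<Rightarrow> ((real^'p1) \<times> (real^'p2)) set" where
  "scl_feasible s1 s2 = {\<beta>. l0norm (fst \<beta>) \<le> s1 \<and> l0norm (snd \<beta>) \<le> s2}"

definition concat_col :: "real^'p1^'n \<Rightarrow> real^'p2^'n \<Rightarrow> ('p1 + 'p2) \<Rightarrow> real^'n" where
  "concat_col X Z j = (case j of Inl i \<Rightarrow> column i X | Inr k \<Rightarrow> column k Z)"

definition s_regular :: "nat \<Rightarrow> (('p1 + 'p2) \<Rightarrow> real^'n) \<Rightarrow> bool" where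
  "s_regular s col = (\<forall>S. card S = s \<longrightarrow>
     (\<forall>w. (\<Sum>j\<in>S. w j *\<^sub>R col j) = 0 \<longrightarrow> (\<forall>j\<in>S. w j = 0)))"

definition local_min_on :: "('a::metric_space \<Rightarrow> real) \<Rightarrow> 'a set \<Rightarrow> 'a \<Rightarrow> bool" where
  "local_min_on f A x = (x \<in> A \<and> (\<exists>e>0. \<forall>y\<in>A. dist y x < e \<longrightarrow> f x \<le> f y))"

end

theory Submission
  imports Defs
begin

definition phi :: "loss \<Rightarrow> real \<Rightarrow> real \<Rightarrow> real" where
  "phi l w z = (case l of Lin \<Rightarrow> (1/2)*(w - z)^2 | Log \<Rightarrow> ln (1 + exp z) - w*z)"

lemma loss_phi: "loss_fun l \<beta> X y = (\<Sum>i\<in>UNIV. phi l (y$i) ((X *v \<beta>)$i))"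
  by (cases l) (auto simp: loss_fun_def phi_def sum_distrib_left)

lemma one_exp_pos: "1 + exp (t::real) > 0"
  using exp_gt_zero[of t] by linarith

lemma one_exp_ne: "1 + exp (t::real) \<noteq> 0"
  using one_exp_pos[of t] by linarith

lemma convex_softplus: "convex_on UNIV (\<lambda>z::real. ln (1 + exp z))"
proof (rule convex_on_realI[where f'="\<lambda>z. exp z / (1 + exp z)"])
  show "connected (UNIV::real set)" by simp
  fix x :: real
  show "((\<lambda>z. ln (1 + exp z)) has_real_derivative exp x / (1 + exp x)) (at x)"
    by (rule derivative_eq_intros refl | simp add: add_pos_pos)+
next
  fix x y :: real assume "x \<le> y"
  have "exp x \<le> exp y" using \<open>x \<le> y\<close> by simp
  then show "exp x / (1 + exp x) \<le> exp y / (1 + exp y)"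
  proof -
    have eq: "exp z/(1+exp z) = 1 - 1/(1+exp z)" for z :: real
      using one_exp_ne[of z] by (simp add: field_simps)
    have "1/(1+exp y) \<le> 1/(1+exp x)"
      by (rule divide_left_mono) (use \<open>exp x \<le> exp y\<close> one_exp_pos[of x] one_exp_pos[of y] in auto)
    then show ?thesis unfolding eq by linarith
  qed
qed

lemma phi_convex:
  assumes "0 \<le> t" "t \<le> 1"
  shows "phi l w ((1-t)*p + t*q) \<le> (1-t)*phi l w p + t*phi l w q"
proof (cases l)
  case Lin
  have "(1-t)*(w-p)^2 + t*(w-q)^2 - (w - ((1-t)*p+t*q))^2 = t*(1-t)*(p-q)^2"
    by (simp add: algebra_simps power2_eq_square)
  moreover have "t*(1-t)*(p-q)^2 \<ge> 0" using assms by simp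
  ultimately show ?thesis using Lin by (simp add: phi_def)
next
  case Log
  have "ln (1 + exp ((1-t)*p + t*q)) \<le> (1-t)* ln (1 + exp p) + t * ln (1 + exp q)"
    using convex_onD[OF convex_softplus, of t p q] assms by simp
  then show ?thesis using Log by (simp add: phi_def algebra_simps)
qed

lemma mv_comb: "(X *v ((1-t) *\<^sub>R u + t *\<^sub>R v)) $ i = (1-t) * (X *v u)$i + t * (X *v v)$i"
proof -
  have "X *v ((1-t) *\<^sub>R u + t *\<^sub>R v) = (1-t) *\<^sub>R (X *v u) + t *\<^sub>R (X *v v)"
    by (simp only: linear_add[OF matrix_vector_mul_linear] linear_scale[OF matrix_vector_mul_linear])
  then show ?thesis by simp
qed

lemma loss_convex:
  assumes "0 \<le> t" "t \<le> 1"
  shows "loss_fun l ((1-t) *\<^sub>R u + t *\<^sub>R v) X y \<le> (1-t)*loss_fun l u X y + t * loss_fun l v X y"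
  unfolding loss_phi mv_comb sum_distrib_left sum.distrib[symmetric]
  by (rule sum_mono) (rule phi_convex[OF assms])

lemma norm_comb: "(norm ((1-t) *\<^sub>R a + t *\<^sub>R b))^2 = (1-t)*(norm a)^2 + t*(norm b)^2 - t*(1-t)*(norm (a - b))^2"
  for a b :: "'a::real_inner"
  by (simp add: power2_norm_eq_inner inner_simps algebra_simps inner_commute)

definition Vs :: "'p1 set \<Rightarrow> 'p2 set \<Rightarrow> ((real^'p1) \<times> (real^'p2)) set" where
  "Vs S1 S2 = {\<beta>. (\<forall>i. i \<notin> S1 \<longrightarrow> fst \<beta> $ i = 0) \<and> (\<forall>k. k \<notin> S2 \<longrightarrow> snd \<beta> $ k = 0)}"

lemma Vs_subspace: "subspace (Vs S1 S2)"
  by (auto simp: subspace_def Vs_def)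

lemma Vs_comb: "u \<in> Vs S1 S2 \<Longrightarrow> v \<in> Vs S1 S2 \<Longrightarrow> (1-t) *\<^sub>R u + t *\<^sub>R v \<in> Vs S1 S2"
  by (auto simp: Vs_def)

lemma Vs_iff: "\<beta> \<in> Vs S1 S2 \<longleftrightarrow> {i. fst \<beta> $ i \<noteq> 0} \<subseteq> S1 \<and> {k. snd \<beta> $ k \<noteq> 0} \<subseteq> S2"
  by (auto simp: Vs_def)

lemma mv_restrict:
  assumes "\<forall>i. i \<notin> S \<longrightarrow> v $ i = 0"
  shows "(X :: real^'p^'n) *v v = (\<Sum>i\<in>S. v$i *\<^sub>R column i X)"
proof -
  have "X *v v = (\<Sum>i\<in>UNIV. v$i *\<^sub>R column i X)"
    by (simp add: matrix_mult_sum scalar_mult_eq_scaleR)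
  also have "\<dots> = (\<Sum>i\<in>S. v$i *\<^sub>R column i X)"
    by (rule sum.mono_neutral_right) (auto simp: assms)
  finally show ?thesis .
qed

lemma regular_inj:
  fixes X :: "real^'p1^'n" and Z :: "real^'p2^'n"
  assumes reg: "s_regular (card S1 + card S2) (concat_col X Z)"
    and V: "\<beta> \<in> Vs S1 S2" and L: "X *v fst \<beta> - Z *v snd \<beta> = 0"
  shows "\<beta> = 0"
proof -
  define S where "S = Inl ` S1 \<union> Inr ` S2"
  define w where "w j = (case j of Inl i \<Rightarrow> fst \<beta> $ i | Inr k \<Rightarrow> - (snd \<beta> $ k))" for j
  have fin1: "finite S1" and fin2: "finite S2" by auto
  have cardS: "card S = card S1 + card S2"
    unfolding S_def
    by (subst card_Un_disjoint) (auto simp: card_image)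
  have "(\<Sum>j\<in>S. w j *\<^sub>R concat_col X Z j)
      = (\<Sum>j\<in>Inl ` S1. w j *\<^sub>R concat_col X Z j) + (\<Sum>j\<in>Inr ` S2. w j *\<^sub>R concat_col X Z j)"
    unfolding S_def by (rule sum.union_disjoint) auto
  also have "\<dots> = (\<Sum>i\<in>S1. fst \<beta> $ i *\<^sub>R column i X) + (\<Sum>k\<in>S2. (- snd \<beta> $ k) *\<^sub>R column k Z)"
    by (simp add: sum.reindex w_def concat_col_def)
  also have "\<dots> = X *v fst \<beta> - Z *v snd \<beta>"
    using V by (simp add: Vs_def mv_restrict[of S1 "fst \<beta>"] mv_restrict[of S2 "snd \<beta>"] sum_negf)
  finally have "(\<Sum>j\<in>S. w j *\<^sub>R concat_col X Z j) = 0" using L by simp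
  with reg cardS have w0: "\<forall>j\<in>S. w j = 0" unfolding s_regular_def by blast
  have "fst \<beta> = 0"
    unfolding vec_eq_iff
  proof
    fix i show "fst \<beta> $ i = 0 $ i"
    proof (cases "i \<in> S1")
      case True
      then have "Inl i \<in> S" by (simp add: S_def)
      then show ?thesis using w0 by (auto simp: w_def)
    qed (use V in \<open>auto simp: Vs_def\<close>)
  qed
  moreover have "snd \<beta> = 0"
    unfolding vec_eq_iff
  proof
    fix i show "snd \<beta> $ i = 0 $ i"
    proof (cases "i \<in> S2")
      case True
      then have "Inr i \<in> S" by (simp add: S_def)
      then show ?thesis using w0 by (auto simp: w_def)
    qed (use V in \<open>auto simp: Vs_def\<close>)
  qed
  ultimately show ?thesis by (simp add: prod_eq_iff)
qed

lemma coercive: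
  fixes X :: "real^'p1^'n" and Z :: "real^'p2^'n"
  assumes reg: "s_regular (card S1 + card S2) (concat_col X Z)"
  obtains B where "B > 0" "\<And>\<beta>. \<beta> \<in> Vs S1 S2 \<Longrightarrow> B * norm \<beta> \<le> norm (X *v fst \<beta> - Z *v snd \<beta>)"
proof -
  define L where "L \<beta> = (X *v fst \<beta> - Z *v snd \<beta>,
     (\<chi> i. if i \<in> S1 then 0 else fst \<beta> $ i) :: real^'p1,
     (\<chi> k. if k \<in> S2 then 0 else snd \<beta> $ k) :: real^'p2)" for \<beta> :: "(real^'p1) \<times> (real^'p2)"
  have lin: "linear L"
  proof (rule linearI)
    fix u v :: "(real^'p1) \<times> (real^'p2)"
    show "L (u + v) = L u + L v"
      by (simp add: L_def vec_eq_iff linear_add[OF matrix_vector_mul_linear] algebra_simps)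
  next
    fix r and u :: "(real^'p1) \<times> (real^'p2)"
    show "L (r *\<^sub>R u) = r *\<^sub>R L u"
      by (simp add: L_def vec_eq_iff linear_scale[OF matrix_vector_mul_linear] algebra_simps)
  qed
  have "inj L"
    unfolding linear_injective_0[OF lin]
  proof (intro allI impI)
    fix x assume "L x = 0"
    then have h1: "X *v fst x - Z *v snd x = 0"
      and h2: "\<forall>i. i \<notin> S1 \<longrightarrow> fst x $ i = 0" and h3: "\<forall>k. k \<notin> S2 \<longrightarrow> snd x $ k = 0"
      by (auto simp: L_def vec_eq_iff zero_prod_def split: if_splits)
    show "x = 0" by (rule regular_inj[OF reg _ h1]) (use h2 h3 in \<open>simp add: Vs_def\<close>)
  qed
  then obtain B where B: "B > 0" "\<And>x. B * norm x \<le> norm (L x)"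
    using linear_inj_bounded_below_pos[OF lin] by blast
  show ?thesis
  proof (rule that[OF B(1)])
    fix \<beta> assume "\<beta> \<in> Vs S1 S2"
    then have "L \<beta> = (X *v fst \<beta> - Z *v snd \<beta>, 0, 0)"
      by (auto simp: L_def Vs_def vec_eq_iff)
    then show "B * norm \<beta> \<le> norm (X *v fst \<beta> - Z *v snd \<beta>)"
      using B(2)[of \<beta>] by (simp add: norm_Pair)
  qed
qed

lemma obj_expand: "scl_obj l a b c X Z y \<beta> = (1 / real CARD('n)) *
     (a * loss_fun l (fst \<beta>) X y + b * loss_fun l (snd \<beta>) Z y
      + (c/2) * (norm (X *v fst \<beta> - Z *v snd \<beta>))^2)"
  for X :: "real^'p1^'n"
  by (simp add: scl_obj_def)

lemma strict_conv:
  fixes X :: "real^'p1^'n" and Z :: "real^'p2^'n"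
  assumes reg: "s_regular (card S1 + card S2) (concat_col X Z)"
    and pos: "a > 0" "b > 0" "c > 0"
    and uv: "u \<in> Vs S1 S2" "v \<in> Vs S1 S2" "u \<noteq> v" and t: "0 < t" "t < 1"
  shows "scl_obj l a b c X Z y ((1-t) *\<^sub>R u + t *\<^sub>R v)
     < (1-t) * scl_obj l a b c X Z y u + t * scl_obj l a b c X Z y v"
proof -
  define w where "w = (1-t) *\<^sub>R u + t *\<^sub>R v"
  define Lf where "Lf \<beta> = X *v fst \<beta> - Z *v snd \<beta>" for \<beta> :: "(real^'p1) \<times> (real^'p2)"
  define G where "G \<beta> = a * loss_fun l (fst \<beta>) X y + b * loss_fun l (snd \<beta>) Z y
      + (c/2) * (norm (Lf \<beta>))^2" for \<beta>
  have Fw: "scl_obj l a b c X Z y \<beta> = (1 / real CARD('n)) * G \<beta>" for \<beta>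
    by (simp add: scl_obj_def G_def Lf_def)
  have fw: "fst w = (1-t) *\<^sub>R fst u + t *\<^sub>R fst v" "snd w = (1-t) *\<^sub>R snd u + t *\<^sub>R snd v"
    by (simp_all add: w_def)
  have h1: "loss_fun l (fst w) X y \<le> (1-t) * loss_fun l (fst u) X y + t * loss_fun l (fst v) X y"
    unfolding fw by (rule loss_convex) (use t in auto)
  have h2: "loss_fun l (snd w) Z y \<le> (1-t) * loss_fun l (snd u) Z y + t * loss_fun l (snd v) Z y"
    unfolding fw by (rule loss_convex) (use t in auto)
  have Lw: "Lf w = (1-t) *\<^sub>R Lf u + t *\<^sub>R Lf v"
    unfolding Lf_def fw
    by (simp add: linear_add[OF matrix_vector_mul_linear] linear_scale[OF matrix_vector_mul_linear] algebra_simps)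
  have Ldiff: "Lf u - Lf v = Lf (u - v)"
    by (simp add: Lf_def linear_diff[OF matrix_vector_mul_linear] algebra_simps)
  have "u - v \<in> Vs S1 S2" using uv Vs_subspace subspace_diff by blast
  moreover have "u - v \<noteq> 0" using uv by simp
  ultimately have "Lf (u - v) \<noteq> 0"
  proof -
    assume a1: "u - v \<in> Vs S1 S2" and a2: "u - v \<noteq> 0"
    show ?thesis
    proof
      assume "Lf (u - v) = 0"
      then have "u - v = 0" using regular_inj[OF reg a1] unfolding Lf_def by blast
      with a2 show False by simp
    qed
  qed
  then have "norm (Lf u - Lf v) > 0" using Ldiff by simp
  then have "t * (1-t) * (norm (Lf u - Lf v))^2 > 0" using t by simp
  then have h3: "(norm (Lf w))^2 < (1-t) * (norm (Lf u))^2 + t * (norm (Lf v))^2"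
    unfolding Lw norm_comb by linarith
  have "a * loss_fun l (fst w) X y \<le> a * ((1-t) * loss_fun l (fst u) X y + t * loss_fun l (fst v) X y)"
    using h1 pos by (simp add: mult_left_mono)
  moreover have "b * loss_fun l (snd w) Z y \<le> b * ((1-t) * loss_fun l (snd u) Z y + t * loss_fun l (snd v) Z y)"
    using h2 pos by (simp add: mult_left_mono)
  moreover have "(c/2) * (norm (Lf w))^2 < (c/2) * ((1-t) * (norm (Lf u))^2 + t * (norm (Lf v))^2)"
    using h3 pos by simp
  moreover have "(1-t) * G u + t * G v = a * ((1-t) * loss_fun l (fst u) X y + t * loss_fun l (fst v) X y)
     + b * ((1-t) * loss_fun l (snd u) Z y + t * loss_fun l (snd v) Z y)
     + (c/2) * ((1-t) * (norm (Lf u))^2 + t * (norm (Lf v))^2)"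
    unfolding G_def by (simp add: field_simps)
  moreover have "G w = a * loss_fun l (fst w) X y + b * loss_fun l (snd w) Z y + (c/2) * (norm (Lf w))^2"
    by (simp add: G_def)
  ultimately have "G w < (1-t) * G u + t * G v"
    by linarith
  then have "(1 / real CARD('n)) * G w < (1 / real CARD('n)) * ((1-t) * G u + t * G v)"
    by (intro mult_strict_left_mono) auto
  moreover have "(1 / real CARD('n)) * ((1-t) * G u + t * G v)
     = (1-t) * ((1 / real CARD('n)) * G u) + t * ((1 / real CARD('n)) * G v)"
    by (simp only: ring_distribs mult_ac)
  ultimately show ?thesis unfolding Fw w_def[symmetric] by linarith
qed

lemma local_to_global:
  fixes F :: "'a::real_normed_vector \<Rightarrow> real"
  assumes conv: "\<And>u v t. u \<in> V \<Longrightarrow> v \<in> V \<Longrightarrow> u \<noteq> v \<Longrightarrow> 0 < t \<Longrightarrow> t < 1 \<Longrightarrow>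
        F ((1-t) *\<^sub>R u + t *\<^sub>R v) < (1-t) * F u + t * F v"
    and comb: "\<And>u v t. u \<in> V \<Longrightarrow> v \<in> V \<Longrightarrow> (1-t) *\<^sub>R u + t *\<^sub>R v \<in> V"
    and \<beta>: "\<beta> \<in> V" and e: "e > 0" and loc: "\<forall>\<gamma>\<in>V. dist \<gamma> \<beta> < e \<longrightarrow> F \<beta> \<le> F \<gamma>"
    and \<gamma>: "\<gamma> \<in> V" "\<gamma> \<noteq> \<beta>"
  shows "F \<beta> < F \<gamma>"
proof -
  define d where "d = norm (\<gamma> - \<beta>)"
  have d: "d > 0" using \<gamma> by (simp add: d_def)
  define t where "t = min (1/2) (e / (2*d))"
  have t: "0 < t" "t < 1" "t * d \<le> e/2" using d e
    by (auto simp: t_def min_def field_simps)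
  define p where "p = (1-t) *\<^sub>R \<beta> + t *\<^sub>R \<gamma>"
  have pV: "p \<in> V" using comb \<beta> \<gamma> by (simp add: p_def)
  have "p - \<beta> = t *\<^sub>R (\<gamma> - \<beta>)" by (simp add: p_def algebra_simps)
  then have "dist p \<beta> = t * d" using t by (simp add: dist_norm d_def)
  then have "dist p \<beta> < e" using t e by linarith
  then have "F \<beta> \<le> F p" using loc pV by blast
  also have "F p < (1-t) * F \<beta> + t * F \<gamma>"
    unfolding p_def by (rule conv) (use \<beta> \<gamma> t in auto)
  finally have "t * F \<beta> < t * F \<gamma>" by (simp add: algebra_simps)
  then show ?thesis using t by simp
qed

lemma phi_nonneg: "(l = Log \<Longrightarrow> w = 0 \<or> w = 1) \<Longrightarrow> phi l w z \<ge> 0"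
proof (cases l)
  case Lin then show ?thesis by (simp add: phi_def)
next
  case Log
  assume h: "l = Log \<Longrightarrow> w = 0 \<or> w = 1"
  have "ln (1 + exp z) \<ge> 0" by simp
  moreover have "ln (exp z) \<le> ln (1 + exp z)"
    using exp_gt_zero[of z] by (subst ln_le_cancel_iff) linarith+
  then have "ln (1 + exp z) \<ge> z" by simp
  ultimately show ?thesis using h Log by (auto simp: phi_def)
qed

lemma loss_nonneg: "(l = Log \<Longrightarrow> (\<forall>i. y$i = 0 \<or> y$i = 1)) \<Longrightarrow> loss_fun l \<beta> X y \<ge> 0"
  unfolding loss_phi by (rule sum_nonneg) (rule phi_nonneg, auto)


lemma cont_mv[continuous_intros]: fixes A :: "real^'m^'k" assumes "continuous_on S f" shows "continuous_on S (\<lambda>x. A *v f x)"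
  using continuous_on_compose[OF assms matrix_vector_mult_linear_continuous_on[of "f ` S" A]] by (simp add: o_def)

lemma loss_cont: "continuous_on UNIV (\<lambda>v. loss_fun l v X y)"
proof (cases l)
  case Lin
  show ?thesis unfolding loss_phi phi_def Lin
    by (simp; intro continuous_intros; simp)
next
  case Log
  show ?thesis unfolding loss_phi phi_def Log
    by (simp; intro continuous_intros; simp add: one_exp_ne)
qed

lemma obj_cont: "continuous_on UNIV (scl_obj l a b c X Z y)"
proof -
  have c1: "continuous_on UNIV (\<lambda>\<beta>::(real^'a)\<times>(real^'b). loss_fun l (fst \<beta>) X y)"
    using continuous_on_compose[of UNIV fst "\<lambda>v. loss_fun l v X y"] loss_cont continuous_on_fst[OF continuous_on_id]
    by (auto simp: o_def)
  have c2: "continuous_on UNIV (\<lambda>\<beta>::(real^'a)\<times>(real^'b). loss_fun l (snd \<beta>) Z y)"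
    using continuous_on_compose[of UNIV snd "\<lambda>v. loss_fun l v Z y"] loss_cont continuous_on_snd[OF continuous_on_id]
    by (auto simp: o_def)
  show ?thesis unfolding scl_obj_def[abs_def]
    by (intro continuous_intros c1 c2)
qed

lemma exists_min:
  fixes X :: "real^'p1^'n" and Z :: "real^'p2^'n"
  assumes reg: "s_regular (card S1 + card S2) (concat_col X Z)"
    and pos: "a > 0" "b > 0" "c > 0"
    and ylog: "l = Log \<Longrightarrow> (\<forall>i. y$i = 0 \<or> y$i = 1)"
  shows "\<exists>m\<in>Vs S1 S2. \<forall>\<gamma>\<in>Vs S1 S2. scl_obj l a b c X Z y m \<le> scl_obj l a b c X Z y \<gamma>"
proof -
  define F where "F = scl_obj l a b c X Z y"
  obtain B where B: "B > 0" "\<And>\<beta>. \<beta> \<in> Vs S1 S2 \<Longrightarrow> B * norm \<beta> \<le> norm (X *v fst \<beta> - Z *v snd \<beta>)"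
    using coercive[OF reg] by blast
  define q where "q = (c / (2 * real CARD('n))) * B^2"
  have q: "q > 0" using pos B by (simp add: q_def)
  have lb: "q * (norm \<beta>)^2 \<le> F \<beta>" if "\<beta> \<in> Vs S1 S2" for \<beta>
  proof -
    have l1: "loss_fun l (fst \<beta>) X y \<ge> 0" "loss_fun l (snd \<beta>) Z y \<ge> 0"
      using loss_nonneg ylog by blast+
    have "(B * norm \<beta>)^2 \<le> (norm (X *v fst \<beta> - Z *v snd \<beta>))^2"
      by (rule power_mono) (use B that in auto)
    then have "(c/2) * (B * norm \<beta>)^2 \<le> (c/2) * (norm (X *v fst \<beta> - Z *v snd \<beta>))^2"
      using pos by simp
    moreover have "0 \<le> a * loss_fun l (fst \<beta>) X y + b * loss_fun l (snd \<beta>) Z y"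
      using l1 pos by simp
    ultimately have "(c/2) * (B * norm \<beta>)^2 \<le> a * loss_fun l (fst \<beta>) X y + b * loss_fun l (snd \<beta>) Z y
      + (c/2) * (norm (X *v fst \<beta> - Z *v snd \<beta>))^2" by linarith
    then have "(1 / real CARD('n)) * ((c/2) * (B * norm \<beta>)^2) \<le> F \<beta>"
      unfolding F_def scl_obj_def by (intro mult_left_mono) auto
    moreover have "(1 / real CARD('n)) * ((c/2) * (B * norm \<beta>)^2) = q * (norm \<beta>)^2"
      by (simp add: q_def power_mult_distrib)
    ultimately show ?thesis by simp
  qed
  define K where "K = Vs S1 S2 \<inter> {\<beta>. F \<beta> \<le> F 0}"
  have "closed K"
    unfolding K_def F_def
    by (intro closed_Int closed_subspace[OF Vs_subspace] closed_Collect_le obj_cont continuous_on_const)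
  moreover have "bounded K"
    unfolding bounded_iff
  proof (intro exI ballI)
    fix x assume "x \<in> K"
    then have xK: "x \<in> Vs S1 S2" "F x \<le> F 0" by (auto simp: K_def)
    then have "q * (norm x)^2 \<le> F 0" using lb[of x] by linarith
    then have h: "(norm x)^2 \<le> F 0 / q" using q by (simp add: le_divide_eq mult.commute)
    have "norm x \<le> 1 + (norm x)^2"
    proof (cases "norm x \<le> 1")
      case True then show ?thesis by (smt (z3) zero_le_power2)
    next
      case False
      then have "norm x * 1 \<le> norm x * norm x" by (intro mult_left_mono) auto
      then show ?thesis by (simp add: power2_eq_square)
    qed
    with h show "norm x \<le> 1 + F 0 / q" by linarith
  qed
  ultimately have "compact K" by (simp add: compact_eq_bounded_closed)
  moreover have "0 \<in> K" by (simp add: K_def Vs_def)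
  moreover have "continuous_on K F" unfolding F_def by (rule continuous_on_subset[OF obj_cont]) simp
  ultimately obtain m where m: "m \<in> K" "\<forall>\<gamma>\<in>K. F m \<le> F \<gamma>"
    using continuous_attains_inf[of K F] by blast
  show ?thesis
  proof (intro bexI ballI)
    show "m \<in> Vs S1 S2" using m by (simp add: K_def)
    fix \<gamma> assume g: "\<gamma> \<in> Vs S1 S2"
    show "scl_obj l a b c X Z y m \<le> scl_obj l a b c X Z y \<gamma>"
    proof (cases "\<gamma> \<in> K")
      case True then show ?thesis using m by (simp add: F_def)
    next
      case False
      then have "F 0 < F \<gamma>" using g by (auto simp: K_def)
      moreover have "F m \<le> F 0" using m \<open>0 \<in> K\<close> by blast
      ultimately show ?thesis by (simp add: F_def)
    qed
  qed
qed

theorem theorem3p5: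
  fixes X :: "real^'p1^'n" and Z :: "real^'p2^'n" and y :: "real^'n"
    and a b c :: real and s1 s2 :: nat and l :: loss
  assumes "a > 0" and "b > 0" and "c > 0"
    and "1 \<le> s1" and "s1 \<le> CARD('p1)" and "1 \<le> s2" and "s2 \<le> CARD('p2)"
    and "l = Log \<Longrightarrow> (\<forall>i. y$i = 0 \<or> y$i = 1)"
    and "s_regular (s1 + s2) (concat_col X Z)"
  shows "(\<exists>\<beta>\<in>scl_feasible s1 s2. \<forall>\<gamma>\<in>scl_feasible s1 s2.
            scl_obj l a b c X Z y \<beta> \<le> scl_obj l a b c X Z y \<gamma>)
       \<and> finite {\<beta>. local_min_on (scl_obj l a b c X Z y) (scl_feasible s1 s2) \<beta>}
       \<and> (\<forall>\<beta>s. local_min_on (scl_obj l a b c X Z y) (scl_feasible s1 s2) \<beta>s \<longrightarrow>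
            (\<exists>\<delta>>0. \<forall>\<gamma>\<in>scl_feasible s1 s2. norm (\<gamma> - \<beta>s) < \<delta> \<and> \<gamma> \<noteq> \<beta>s \<longrightarrow>
               scl_obj l a b c X Z y \<beta>s < scl_obj l a b c X Z y \<gamma>))"
proof -
  define F where "F = scl_obj l a b c X Z y"
  define Sig where "Sig = (scl_feasible s1 s2 :: ((real^'p1) \<times> (real^'p2)) set)"
  define SS where "SS = {S :: 'p1 set \<times> 'p2 set. card (fst S) = s1 \<and> card (snd S) = s2}"
  define M where "M S = (SOME m. m \<in> Vs (fst S) (snd S) \<and> (\<forall>\<gamma>\<in>Vs (fst S) (snd S). F m \<le> F \<gamma>))" for S
  have finSS: "finite SS" by (rule finite_subset[OF subset_UNIV]) simp
  have regS: "s_regular (card (fst S) + card (snd S)) (concat_col X Z)" if "S \<in> SS" for S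
    using that assms(9) by (simp add: SS_def)
  have M: "M S \<in> Vs (fst S) (snd S) \<and> (\<forall>\<gamma>\<in>Vs (fst S) (snd S). F (M S) \<le> F \<gamma>)" if SS: "S \<in> SS" for S
  proof -
    obtain m where "m \<in> Vs (fst S) (snd S)" "\<forall>\<gamma>\<in>Vs (fst S) (snd S). F m \<le> F \<gamma>"
      using exists_min[OF regS[OF SS] assms(1-3) assms(8)] unfolding F_def by blast
    then show ?thesis unfolding M_def by (rule someI[where x=m, OF conjI])
  qed
  have VinSig: "Vs (fst S) (snd S) \<subseteq> Sig" if "S \<in> SS" for S
  proof
    fix \<beta> assume "\<beta> \<in> Vs (fst S) (snd S)"
    then have "{i. fst \<beta> $ i \<noteq> 0} \<subseteq> fst S" "{k. snd \<beta> $ k \<noteq> 0} \<subseteq> snd S" by (auto simp: Vs_iff)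
    then have "card {i. fst \<beta> $ i \<noteq> 0} \<le> card (fst S)" "card {k. snd \<beta> $ k \<noteq> 0} \<le> card (snd S)"
      by (auto intro: card_mono)
    then show "\<beta> \<in> Sig" using that by (simp add: Sig_def scl_feasible_def l0norm_def SS_def)
  qed
  have cover: "\<exists>S\<in>SS. {i. fst \<gamma> $ i \<noteq> 0} \<subseteq> fst S \<and> {k. snd \<gamma> $ k \<noteq> 0} \<subseteq> snd S"
    if "\<gamma> \<in> Sig" for \<gamma>
  proof -
    have c1: "card {i. fst \<gamma> $ i \<noteq> 0} \<le> s1" "card {k. snd \<gamma> $ k \<noteq> 0} \<le> s2"
      using that by (auto simp: Sig_def scl_feasible_def l0norm_def)
    obtain S1 where "{i. fst \<gamma> $ i \<noteq> 0} \<subseteq> S1" "card S1 = s1"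
      using exists_subset_between[of "{i. fst \<gamma> $ i \<noteq> 0}" s1 UNIV] c1 assms(5) by auto
    moreover obtain S2 where "{k. snd \<gamma> $ k \<noteq> 0} \<subseteq> S2" "card S2 = s2"
      using exists_subset_between[of "{k. snd \<gamma> $ k \<noteq> 0}" s2 UNIV] c1 assms(7) by auto
    ultimately show ?thesis by (intro bexI[of _ "(S1, S2)"]) (auto simp: SS_def)
  qed
  have uniq: "F \<beta> < F \<gamma>"
    if lm: "local_min_on F Sig \<beta>" and S: "S \<in> SS" and b: "\<beta> \<in> Vs (fst S) (snd S)"
      and g: "\<gamma> \<in> Vs (fst S) (snd S)" "\<gamma> \<noteq> \<beta>" for \<beta> \<gamma> S
  proof -
    obtain e where e: "e > 0" "\<forall>\<gamma>\<in>Sig. dist \<gamma> \<beta> < e \<longrightarrow> F \<beta> \<le> F \<gamma>"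
      using lm unfolding local_min_on_def by blast
    then have e': "\<forall>\<gamma>\<in>Vs (fst S) (snd S). dist \<gamma> \<beta> < e \<longrightarrow> F \<beta> \<le> F \<gamma>"
      using VinSig[OF S] by blast
    show ?thesis
      by (rule local_to_global[where V="Vs (fst S) (snd S)", OF _ _ b e(1) e' g])
        (auto simp: F_def intro: strict_conv[OF regS[OF S] assms(1-3)] Vs_comb)
  qed
  have part1: "\<exists>\<beta>\<in>Sig. \<forall>\<gamma>\<in>Sig. F \<beta> \<le> F \<gamma>"
  proof -
    have "(0 :: (real^'p1) \<times> (real^'p2)) \<in> Sig" by (simp add: Sig_def scl_feasible_def l0norm_def)
    then have ne: "SS \<noteq> {}" using cover by blast
    define v where "v = Min ((\<lambda>S. F (M S)) ` SS)"
    have "v \<in> (\<lambda>S. F (M S)) ` SS" unfolding v_def by (rule Min_in) (use finSS ne in auto)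
    then obtain S0 where S0: "S0 \<in> SS" "v = F (M S0)" by blast
    show ?thesis
    proof (intro bexI ballI)
      show "M S0 \<in> Sig" using M[OF S0(1)] VinSig[OF S0(1)] by blast
      fix \<gamma> assume g: "\<gamma> \<in> Sig"
      obtain S where S: "S \<in> SS" "\<gamma> \<in> Vs (fst S) (snd S)" using cover[OF g] by (auto simp: Vs_iff)
      have "F (M S0) \<le> F (M S)" using S0 S(1) finSS unfolding v_def by (metis Min_le finite_imageI imageI)
      also have "\<dots> \<le> F \<gamma>" using M[OF S(1)] S(2) by blast
      finally show "F (M S0) \<le> F \<gamma>" .
    qed
  qed
  have part2: "finite {\<beta>. local_min_on F Sig \<beta>}"
  proof (rule finite_subset[OF _ finite_imageI[OF finSS, of M]])
    show "{\<beta>. local_min_on F Sig \<beta>} \<subseteq> M ` SS"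
    proof
      fix \<beta> assume "\<beta> \<in> {\<beta>. local_min_on F Sig \<beta>}"
      then have lm: "local_min_on F Sig \<beta>" by simp
      then have bS: "\<beta> \<in> Sig" by (simp add: local_min_on_def)
      obtain S where S: "S \<in> SS" "\<beta> \<in> Vs (fst S) (snd S)" using cover[OF bS] by (auto simp: Vs_iff)
      have "M S = \<beta>"
      proof (rule ccontr)
        assume "M S \<noteq> \<beta>"
        then have "F \<beta> < F (M S)" using uniq[OF lm S(1) S(2)] M[OF S(1)] by blast
        moreover have "F (M S) \<le> F \<beta>" using M[OF S(1)] S(2) by blast
        ultimately show False by simp
      qed
      then show "\<beta> \<in> M ` SS" using S(1) by blast
    qed
  qed
  have part3: "\<exists>\<delta>>0. \<forall>\<gamma>\<in>Sig. norm (\<gamma> - \<beta>) < \<delta> \<and> \<gamma> \<noteq> \<beta> \<longrightarrow> F \<beta> < F \<gamma>"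
    if lm: "local_min_on F Sig \<beta>" for \<beta>
  proof -
    define A where "A = insert 1 ((\<lambda>i. \<bar>fst \<beta> $ i\<bar>) ` {i. fst \<beta> $ i \<noteq> 0} \<union> (\<lambda>k. \<bar>snd \<beta> $ k\<bar>) ` {k. snd \<beta> $ k \<noteq> 0})"
    have finA: "finite A" by (simp add: A_def)
    define \<delta> where "\<delta> = Min A"
    have "\<delta> > 0" unfolding \<delta>_def using finA by (subst Min_gr_iff) (auto simp: A_def)
    moreover have "F \<beta> < F \<gamma>" if g: "\<gamma> \<in> Sig" "norm (\<gamma> - \<beta>) < \<delta>" "\<gamma> \<noteq> \<beta>" for \<gamma>
    proof -
      have dp: "\<gamma> - \<beta> = (fst \<gamma> - fst \<beta>, snd \<gamma> - snd \<beta>)" by (simp add: prod_eq_iff)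
      have n1: "norm (fst \<gamma> - fst \<beta>) \<le> norm (\<gamma> - \<beta>)"
        by (subst dp) (rule norm_fst_le)
      have n2: "norm (snd \<gamma> - snd \<beta>) \<le> norm (\<gamma> - \<beta>)"
        by (subst dp) (rule norm_snd_le)
      have s1: "{i. fst \<beta> $ i \<noteq> 0} \<subseteq> {i. fst \<gamma> $ i \<noteq> 0}"
      proof
        fix i assume i: "i \<in> {i. fst \<beta> $ i \<noteq> 0}"
        then have "\<bar>fst \<beta> $ i\<bar> \<in> A" by (simp add: A_def)
        then have "\<delta> \<le> \<bar>fst \<beta> $ i\<bar>" unfolding \<delta>_def using finA by simp
        moreover have "\<bar>(fst \<gamma> - fst \<beta>) $ i\<bar> \<le> norm (fst \<gamma> - fst \<beta>)" by (rule component_le_norm_cart)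
        ultimately show "i \<in> {i. fst \<gamma> $ i \<noteq> 0}" using n1 g(2) by auto
      qed
      have s2: "{k. snd \<beta> $ k \<noteq> 0} \<subseteq> {k. snd \<gamma> $ k \<noteq> 0}"
      proof
        fix i assume i: "i \<in> {i. snd \<beta> $ i \<noteq> 0}"
        then have "\<bar>snd \<beta> $ i\<bar> \<in> A" by (simp add: A_def)
        then have "\<delta> \<le> \<bar>snd \<beta> $ i\<bar>" unfolding \<delta>_def using finA by simp
        moreover have "\<bar>(snd \<gamma> - snd \<beta>) $ i\<bar> \<le> norm (snd \<gamma> - snd \<beta>)" by (rule component_le_norm_cart)
        ultimately show "i \<in> {i. snd \<gamma> $ i \<noteq> 0}" using n2 g(2) by auto
      qed
      obtain S where S: "S \<in> SS" "{i. fst \<gamma> $ i \<noteq> 0} \<subseteq> fst S" "{k. snd \<gamma> $ k \<noteq> 0} \<subseteq> snd S"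
        using cover[OF g(1)] by blast
      have "\<beta> \<in> Vs (fst S) (snd S)" "\<gamma> \<in> Vs (fst S) (snd S)"
        using S s1 s2 by (auto simp: Vs_iff)
      then show ?thesis using uniq[OF lm S(1)] g(3) by blast
    qed
    ultimately show ?thesis by blast
  qed
  show ?thesis using part1 part2 part3 unfolding F_def Sig_def by blast
qed
end
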